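(* Let $H$ be a reduced double-well type potential and $\beta>0$. Then \begin{enumerate} \item $F_\beta^0(\lambda_\beta)F_\beta^1(\lambda_\beta)=1$; \item $\Phi_\beta(01)=F_\beta^1(\lambda_\beta)\Phi_\beta(10)$ and $\Phi_\beta(10)=F_\beta^0(\lambda_\beta)\Phi_\beta(01)$; \item $\nu_\beta[01]=F_\beta^0(\lambda_\beta)\nu_\beta[10]$ and $\nu_\beta[10]=F_\beta^1(\lambda_\beta)\nu_\beta[01]$. \end{enumerate}
   Context: $\Sigma:=\{0,1\}^{\mathbb N}$, $\sigma$ the left shift. A reduced double-well type potential is a continuous nonnegative $H:\Sigma\to\mathbb R$ with summable variation such that $H=0$ on $[00]\cup[11]$, $H=H_n^0>0$ on $[01^n0]$, $H=H_n^1>0$ on $[10^n1]$ ($n\ge1$), and $\sum_{k\ge1}\sup_{n\ge0}|H_k^i-H_{k+n}^i|<\infty$ ($i=0,1$). $\mathcal L_\beta[\Phi](x)=e^{-\beta H(0x)}\Phi(0x)+e^{-\beta H(1x)}\Phi(1x)$; $\Phi_\beta$ the unique positive continuous eigenfunction with $\max\Phi_\beta=1$, $\lambda_\beta$ its eigenvalue, $\nu_\beta$ the unique probability with $\mathcal L_\beta^*\nu_\beta=\lambda_\beta\nu_\beta$. $\Phi_\beta$ is constant on $[01]$ and $[10]$; $\Phi_\beta(01),\Phi_\beta(10)$ denote these values. $F_\beta^i(\lambda):=\sum_{k\ge1}\lambda^{-k}e^{-\beta H_k^i}$ for $i=0,1$. *)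

theory Defs
  imports "HOL-Probability.Probability"
begin

text \<open>The full shift \<open>\<Sigma> = {0,1}^\<nat>\<close> is the type \<open>nat \<Rightarrow> bool\<close>
  (symbol 0 = False, symbol 1 = True) carrying the product topology
  (library instance, bool is discrete).\<close>

type_synonym seq = "nat \<Rightarrow> bool"

definition cyl :: "bool list \<Rightarrow> seq set" where
  "cyl w = {x. \<forall>i<length w. x i = w ! i}"

definition scons :: "bool \<Rightarrow> seq \<Rightarrow> seq" where
  "scons a x = case_nat a x"

definition var :: "(seq \<Rightarrow> real) \<Rightarrow> nat \<Rightarrow> real" where
  "var H n = Sup {\<bar>H x - H y\<bar> | x y. \<forall>i<n. x i = y i}"

definition summable_variation :: "(seq \<Rightarrow> real) \<Rightarrow> bool" where
  "summable_variation H \<longleftrightarrow> summable (\<lambda>n. var H (Suc n))"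

definition reduced_double_well ::
    "(seq \<Rightarrow> real) \<Rightarrow> (nat \<Rightarrow> real) \<Rightarrow> (nat \<Rightarrow> real) \<Rightarrow> bool" where
  "reduced_double_well H H0 H1 \<longleftrightarrow>
     continuous_on UNIV H \<and> (\<forall>x. 0 \<le> H x) \<and> summable_variation H \<and>
     (\<forall>x \<in> cyl [False, False] \<union> cyl [True, True]. H x = 0) \<and>
     (\<forall>n\<ge>1. H0 n > 0 \<and> (\<forall>x \<in> cyl ([False] @ replicate n True @ [False]). H x = H0 n)) \<and>
     (\<forall>n\<ge>1. H1 n > 0 \<and> (\<forall>x \<in> cyl ([True] @ replicate n False @ [True]). H x = H1 n)) \<and>
     summable (\<lambda>k. SUP n. \<bar>H0 (Suc k) - H0 (Suc k + n)\<bar>) \<and>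
     summable (\<lambda>k. SUP n. \<bar>H1 (Suc k) - H1 (Suc k + n)\<bar>)"

definition transfer :: "(seq \<Rightarrow> real) \<Rightarrow> real \<Rightarrow> (seq \<Rightarrow> real) \<Rightarrow> seq \<Rightarrow> real" where
  "transfer H \<beta> \<Phi> x =
     exp (- \<beta> * H (scons False x)) * \<Phi> (scons False x)
   + exp (- \<beta> * H (scons True x)) * \<Phi> (scons True x)"

definition Fterm :: "(nat \<Rightarrow> real) \<Rightarrow> real \<Rightarrow> real \<Rightarrow> nat \<Rightarrow> real" where
  "Fterm Hi \<beta> lam k = inverse (lam ^ Suc k) * exp (- \<beta> * Hi (Suc k))"

definition F :: "(nat \<Rightarrow> real) \<Rightarrow> real \<Rightarrow> real \<Rightarrow> real" where
  "F Hi \<beta> lam = (\<Sum>k. Fterm Hi \<beta> lam k)"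

definition is_eigenfunction :: "(seq \<Rightarrow> real) \<Rightarrow> real \<Rightarrow> (seq \<Rightarrow> real) \<Rightarrow> real \<Rightarrow> bool" where
  "is_eigenfunction H \<beta> \<Phi> lam \<longleftrightarrow>
     continuous_on UNIV \<Phi> \<and> (\<forall>x. \<Phi> x > 0) \<and> (\<forall>x. \<Phi> x \<le> 1) \<and> (\<exists>x. \<Phi> x = 1) \<and>
     (\<forall>x. transfer H \<beta> \<Phi> x = lam * \<Phi> x)"

text \<open>\<nu> is a Borel probability on \<Sigma> with \<open>\<L>^*\<nu> = \<lambda>\<nu>\<close>, i.e. \<open>\<nu>(\<L> f) = \<lambda> \<nu>(f)\<close> for all continuous f.\<close>
definition is_eigenmeasure :: "(seq \<Rightarrow> real) \<Rightarrow> real \<Rightarrow> seq measure \<Rightarrow> real \<Rightarrow> bool" where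
  "is_eigenmeasure H \<beta> \<nu> lam \<longleftrightarrow>
     prob_space \<nu> \<and> sets \<nu> = sets borel \<and>
     (\<forall>f. continuous_on UNIV f \<longrightarrow>
        integral\<^sup>L \<nu> (transfer H \<beta> f) = lam * integral\<^sup>L \<nu> f)"

end

theory Submission
  imports Defs
begin

lemma scons_0 [simp]: "scons a x 0 = a" and scons_Suc [simp]: "scons a x (Suc i) = x i"
  by (simp_all add: scons_def)

fun prep :: "bool list \<Rightarrow> seq \<Rightarrow> seq" where
  "prep [] x = x"
| "prep (c # w) x = scons c (prep w x)"

lemma prep_nth: "prep u x i = (if i < length u then u ! i else x (i - length u))"
proof (induction u arbitrary: i)
  case Nil then show ?case by simp
next
  case (Cons c u) then show ?case by (cases i) auto
qed

lemma cyl_iff: "x \<in> cyl w \<longleftrightarrow> (\<forall>i<length w. x i = w ! i)"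
  by (simp add: cyl_def)

lemma scons_cyl [simp]: "scons c x \<in> cyl (d # w) \<longleftrightarrow> c = d \<and> x \<in> cyl w"
  unfolding cyl_iff by (auto simp: less_Suc_eq_0_disj)

lemma cyl_Nil [simp]: "x \<in> cyl []"
  by (simp add: cyl_iff)

lemma cyl_append_prefix: "x \<in> cyl (u @ w) \<Longrightarrow> x \<in> cyl u"
  unfolding cyl_iff by (auto simp: nth_append)

lemma cyl_Cons_prefix: "x \<in> cyl (a # w) \<Longrightarrow> x 0 = a"
  unfolding cyl_iff by auto

lemma cyl_single [simp]: "x \<in> cyl [a] \<longleftrightarrow> x 0 = a"
  unfolding cyl_iff by auto

lemma prep_cyl [simp]: "prep u x \<in> cyl (u @ w) \<longleftrightarrow> x \<in> cyl w"
  by (induction u) auto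

lemma cyl_snoc: "x \<in> cyl (w @ [a]) \<longleftrightarrow> x \<in> cyl w \<and> x (length w) = a"
  unfolding cyl_iff by (auto simp: nth_append less_Suc_eq)

lemma cyl_split: "cyl w = cyl (w @ [a]) \<union> cyl (w @ [\<not> a])"
  "cyl (w @ [a]) \<inter> cyl (w @ [\<not> a]) = {}"
  by (auto simp: cyl_snoc)

lemma transfer_b: "transfer H \<beta> f x =
   exp (- \<beta> * H (scons b x)) * f (scons b x) + exp (- \<beta> * H (scons (\<not> b) x)) * f (scons (\<not> b) x)"
  by (cases b) (simp_all add: transfer_def)

lemma compact_UNIV_seq: "compact (UNIV :: seq set)"
proof -
  have "compact_space (product_topology (\<lambda>i::nat. euclidean :: bool topology) UNIV)"
    unfolding compact_space_product_topology
    by (simp add: compact_space_def finite_imp_compact)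
  then show ?thesis unfolding euclidean_product_topology compact_space_def by simp
qed

lemma cyl_eq_Inter: "cyl w = (\<Inter>i\<in>{..<length w}. (\<lambda>x. x i) -` {w!i})"
  unfolding cyl_def by auto

lemma open_cyl: "open (cyl w)"
proof -
  have "open ((\<lambda>x::seq. x i) -` {c})" for i c
    using continuous_on_open_vimage[of UNIV "\<lambda>x::seq. x i"]
      discrete_topology_class.open_discrete[of "{c}"] by simp
  then show ?thesis unfolding cyl_eq_Inter by auto
qed

lemma closed_cyl: "closed (cyl w)"
proof -
  have "closed ((\<lambda>x::seq. x i) -` {c})" for i c
    using continuous_on_closed_vimage[of UNIV "\<lambda>x::seq. x i"]
      discrete_topology_class.open_discrete[of "- {c}"] by (simp add: closed_def)
  then show ?thesis unfolding cyl_eq_Inter by auto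
qed

lemma compact_cyl: "compact (cyl w)"
  using closed_Int_compact[OF closed_cyl compact_UNIV_seq, of w] by simp

lemma continuous_indicator_cyl: "continuous_on UNIV (indicator (cyl w) :: seq \<Rightarrow> real)"
proof -
  have *: "indicator (cyl w) -` B = (if 1 \<in> B then cyl w else {}) \<union> (if 0 \<in> B then - cyl w else {})"
    for B :: "real set"
    by (auto simp: indicator_def of_bool_def split: if_splits)
  show ?thesis
    unfolding continuous_on_open_vimage[OF open_UNIV]
    using open_cyl closed_cyl[of w] unfolding * by (auto simp: closed_def)
qed

lemma tendsto_seq: 
  fixes v :: "nat \<Rightarrow> seq"
  assumes "\<And>i. \<forall>\<^sub>F n in sequentially. v n i = u i"
  shows "v \<longlonglongrightarrow> u"
proof -
  have "limitin (product_topology (\<lambda>i. euclidean) UNIV) v u sequentially"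
    unfolding limitin_componentwise using assms by (simp add: tendsto_discrete)
  then show ?thesis unfolding euclidean_product_topology by simp
qed


lemma solve_lam: "(lam::real) \<noteq> 0 \<Longrightarrow> lam * x = y \<Longrightarrow> x = y * inverse lam"
  by (auto simp: field_simps)

lemma sums_eq_all:
  fixes f g :: "nat \<Rightarrow> real"
  assumes "\<And>k. f k > 0" "(\<lambda>k. f k * g k) sums s" "summable f" "\<And>k. g k \<le> c"
    and "s = suminf f * c"
  shows "g k = c"
proof (rule ccontr)
  assume "g k \<noteq> c"
  then have lt: "0 < f k * (c - g k)" using assms(1,4)[of k] by simp
  have sm: "(\<lambda>k. f k * (c - g k)) sums (suminf f * c - s)"
  proof -
    have "(\<lambda>k. f k * c) sums (suminf f * c)" using assms(3) by (intro sums_mult2) (simp add: summable_sums)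
    from sums_diff[OF this assms(2)] show ?thesis by (simp add: algebra_simps)
  qed
  have "0 < suminf (\<lambda>k. f k * (c - g k))"
  proof (rule suminf_pos2[OF sums_summable[OF sm] _ lt])
    fix n show "0 \<le> f n * (c - g n)"
      using assms(1)[of n] assms(4)[of n] by (intro mult_nonneg_nonneg) auto
  qed
  with sums_unique[OF sm] assms(5) show False by simp
qed

lemma sums_le_const:
  fixes f g :: "nat \<Rightarrow> real"
  assumes "\<And>k. f k \<ge> 0" "(\<lambda>k. f k * g k) sums s" "summable f" "\<And>k. g k \<le> c"
  shows "s \<le> suminf f * c"
proof -
  have "(\<lambda>k. f k * c) sums (suminf f * c)" using assms(3) by (intro sums_mult2) (simp add: summable_sums)
  then show ?thesis using assms by (intro sums_le[OF _ assms(2)]) (auto intro: mult_left_mono)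
qed

lemma sums_ge_const:
  fixes f g :: "nat \<Rightarrow> real"
  assumes "\<And>k. f k \<ge> 0" "(\<lambda>k. f k * g k) sums s" "summable f" "\<And>k. g k \<ge> c"
  shows "s \<ge> suminf f * c"
proof -
  have "(\<lambda>k. f k * c) sums (suminf f * c)" using assms(3) by (intro sums_mult2) (simp add: summable_sums)
  then show ?thesis using assms by (intro sums_le[OF _ _ assms(2)]) (auto intro: mult_left_mono)
qed

section \<open>The eigenfunction side, for one symbol b\<close>

locale phi_side =
  fixes H :: "seq \<Rightarrow> real" and Hb :: "nat \<Rightarrow> real" and b :: bool and \<beta> lam :: real
    and \<Phi> :: "seq \<Rightarrow> real"
  assumes Hz: "\<And>x. x \<in> cyl [b,b] \<or> x \<in> cyl [\<not>b,\<not>b] \<Longrightarrow> H x = 0"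
    and Hb_pos: "\<And>n. n \<ge> 1 \<Longrightarrow> Hb n > 0"
    and Hb_val: "\<And>n x. n \<ge> 1 \<Longrightarrow> x \<in> cyl (b # replicate n (\<not>b) @ [b]) \<Longrightarrow> H x = Hb n"
    and beta: "\<beta> > 0" and lam: "lam > 1"
    and eig: "\<And>x. transfer H \<beta> \<Phi> x = lam * \<Phi> x" and pos: "\<And>x. \<Phi> x > 0"
    and le1: "\<And>x. \<Phi> x \<le> 1"
begin

lemma Fterm_pos: "Fterm Hb \<beta> lam k > 0"
  using lam by (simp add: Fterm_def)

lemma Fterm_summable: "summable (Fterm Hb \<beta> lam)"
proof (rule summable_comparison_test')
  have "summable (\<lambda>k. inverse lam ^ k)"
    by (rule summable_geometric) (use lam in \<open>simp add: inverse_less_1_iff\<close>)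
  then show "summable (\<lambda>k. inverse lam ^ Suc k)"
    using summable_ignore_initial_segment[of _ 1] by simp
  fix k
  have e: "exp (- \<beta> * Hb (Suc k)) \<le> 1" using beta Hb_pos[of "Suc k"] by simp
  have p: "0 < inverse (lam ^ Suc k)" using lam by simp
  have "inverse (lam ^ Suc k) * exp (- \<beta> * Hb (Suc k)) \<le> inverse (lam ^ Suc k) * 1"
    using mult_left_mono[OF e less_imp_le[OF p]] .
  moreover have "0 \<le> inverse (lam ^ Suc k) * exp (- \<beta> * Hb (Suc k))" using p by simp
  ultimately show "norm (Fterm Hb \<beta> lam k) \<le> inverse lam ^ Suc k"
    unfolding Fterm_def by (simp add: power_inverse)
qed

lemma F_pos: "F Hb \<beta> lam > 0"
  unfolding F_def using suminf_pos[OF Fterm_summable Fterm_pos] .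

lemma rep_sums:
  assumes y: "y \<in> cyl [\<not>b, b]"
  shows "(\<lambda>j. Fterm Hb \<beta> lam j * \<Phi> (scons b (prep (replicate j (\<not>b)) y))) sums \<Phi> y"
    and "scons b (prep (replicate j (\<not>b)) y) \<in> cyl [b, \<not>b]"
proof -
  define z where "z j = prep (replicate j (\<not>b)) y" for j
  have zS: "z (Suc j) = scons (\<not>b) (z j)" for j by (simp add: z_def)
  have zc: "z j \<in> cyl (replicate j (\<not>b) @ [\<not>b, b])" for j using y by (simp add: z_def)
  have zc': "z j \<in> cyl (replicate (Suc j) (\<not>b) @ [b])" for j
    using zc[of j] by (simp add: replicate_append_same[symmetric])
  then show "scons b (prep (replicate j (\<not>b)) y) \<in> cyl [b, \<not>b]"
    unfolding z_def[symmetric] by (auto dest!: cyl_Cons_prefix)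
  have step: "lam * \<Phi> (z j) = exp (- \<beta> * Hb (Suc j)) * \<Phi> (scons b (z j)) + \<Phi> (z (Suc j))" for j
  proof -
    have "H (scons b (z j)) = Hb (Suc j)" using zc'[of j] by (intro Hb_val) auto
    moreover have "H (scons (\<not>b) (z j)) = 0"
      using zc'[of j] by (intro Hz) (auto dest!: cyl_Cons_prefix)
    ultimately show ?thesis using eig[of "z j"] transfer_b[of H \<beta> \<Phi> "z j" b] zS[of j] by simp
  qed
  have part: "\<Phi> y = (\<Sum>j<N. Fterm Hb \<beta> lam j * \<Phi> (scons b (z j))) + \<Phi> (z N) / lam ^ N" for N
  proof (induction N)
    case 0 then show ?case by (simp add: z_def)
  next
    case (Suc N)
    have "\<Phi> (z N) / lam ^ N = Fterm Hb \<beta> lam N * \<Phi> (scons b (z N)) + \<Phi> (z (Suc N)) / lam ^ Suc N"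
    proof -
      have "\<Phi> (z N) / lam ^ N = (lam * \<Phi> (z N)) / lam ^ Suc N" using lam by simp
      also have "\<dots> = (exp (- \<beta> * Hb (Suc N)) * \<Phi> (scons b (z N)) + \<Phi> (z (Suc N))) / lam ^ Suc N"
        by (simp only: step)
      also have "\<dots> = Fterm Hb \<beta> lam N * \<Phi> (scons b (z N)) + \<Phi> (z (Suc N)) / lam ^ Suc N"
        unfolding Fterm_def divide_inverse by (simp add: algebra_simps)
      finally show ?thesis .
    qed
    with Suc show ?case by simp
  qed
  have r0: "(\<lambda>N. \<Phi> (z N) / lam ^ N) \<longlonglongrightarrow> 0"
  proof (rule tendsto_sandwich[of "\<lambda>_. 0" _ _ "\<lambda>N. inverse lam ^ N"])
    show "\<forall>\<^sub>F N in sequentially. 0 \<le> \<Phi> (z N) / lam ^ N" using pos lam by (intro always_eventually allI divide_nonneg_pos) (auto intro: less_imp_le)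
    show "\<forall>\<^sub>F N in sequentially. \<Phi> (z N) / lam ^ N \<le> inverse lam ^ N"
    proof (intro always_eventually allI)
      fix N
      have "\<Phi> (z N) * inverse lam ^ N \<le> 1 * inverse lam ^ N"
        using le1[of "z N"] lam by (intro mult_right_mono) auto
      then show "\<Phi> (z N) / lam ^ N \<le> inverse lam ^ N" by (simp add: divide_inverse power_inverse)
    qed
    show "(\<lambda>N. inverse lam ^ N) \<longlonglongrightarrow> 0" using lam by (intro LIMSEQ_power_zero) (auto simp: inverse_less_1_iff)
  qed simp
  have "(\<lambda>N. \<Phi> y - \<Phi> (z N) / lam ^ N) \<longlonglongrightarrow> \<Phi> y - 0"
    by (intro tendsto_diff tendsto_const r0)
  then show "(\<lambda>j. Fterm Hb \<beta> lam j * \<Phi> (scons b (prep (replicate j (\<not>b)) y))) sums \<Phi> y"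
  proof -
    have "(\<lambda>N. \<Sum>j<N. Fterm Hb \<beta> lam j * \<Phi> (scons b (z j))) = (\<lambda>N. \<Phi> y - \<Phi> (z N) / lam ^ N)"
    proof
      fix N show "(\<Sum>j<N. Fterm Hb \<beta> lam j * \<Phi> (scons b (z j))) = \<Phi> y - \<Phi> (z N) / lam ^ N"
        using part[of N] by linarith
    qed
    with \<open>(\<lambda>N. \<Phi> y - \<Phi> (z N) / lam ^ N) \<longlonglongrightarrow> \<Phi> y - 0\<close> show ?thesis
      unfolding sums_def z_def[symmetric] by simp
  qed
qed

end


section \<open>The eigenmeasure side, for one symbol b\<close>

locale nu_side =
  fixes H :: "seq \<Rightarrow> real" and Hb :: "nat \<Rightarrow> real" and b :: bool and \<beta> lam :: real
    and \<nu> :: "seq measure"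
  assumes Hz: "\<And>x. x \<in> cyl [b,b] \<or> x \<in> cyl [\<not>b,\<not>b] \<Longrightarrow> H x = 0"
    and Hnn: "\<And>x. H x \<ge> 0"
    and Hb_val: "\<And>n x. n \<ge> 1 \<Longrightarrow> x \<in> cyl (b # replicate n (\<not>b) @ [b]) \<Longrightarrow> H x = Hb n"
    and beta: "\<beta> > 0" and lam: "lam > 1"
    and prob: "prob_space \<nu>" and sets_nu: "sets \<nu> = sets borel"
    and eigm: "\<And>f. continuous_on UNIV f \<Longrightarrow> integral\<^sup>L \<nu> (transfer H \<beta> f) = lam * integral\<^sup>L \<nu> f"
begin

sublocale P: prob_space \<nu> by (rule prob)

abbreviation m :: "bool list \<Rightarrow> real" where "m w \<equiv> measure \<nu> (cyl w)"

lemma space_nu: "space \<nu> = UNIV"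
  using sets_eq_imp_space_eq[OF sets_nu] by simp

lemma cyl_sets: "cyl w \<in> sets \<nu>"
  unfolding sets_nu using open_cyl by simp

lemma int_ind: "integral\<^sup>L \<nu> (indicator (cyl w) :: seq \<Rightarrow> real) = m w"
  by (simp add: space_nu)

lemma trans_ind: "transfer H \<beta> (indicator (cyl (d # v))) x = exp (- \<beta> * H (scons d x)) * (indicator (cyl v) x :: real)"
  using transfer_b[of H \<beta> "indicator (cyl (d # v)) :: seq \<Rightarrow> real" x d] by (simp add: indicator_def)

lemma eq_basic: "lam * m (d # v) = integral\<^sup>L \<nu> (\<lambda>x. exp (- \<beta> * H (scons d x)) * (indicator (cyl v) x :: real))"
proof -
  have "integral\<^sup>L \<nu> (transfer H \<beta> (indicator (cyl (d # v)))) = lam * integral\<^sup>L \<nu> (indicator (cyl (d # v)) :: seq \<Rightarrow> real)"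
    by (rule eigm[OF continuous_indicator_cyl])
  then show ?thesis unfolding int_ind trans_ind by simp
qed

lemma M1: "m (replicate (Suc j) (\<not>b) @ [b]) = m [\<not>b, b] * inverse (lam ^ j)"
proof (induction j)
  case 0 then show ?case by simp
next
  case (Suc j)
  let ?v = "replicate (Suc j) (\<not>b) @ [b]"
  have fe: "(\<lambda>x. exp (- \<beta> * H (scons (\<not>b) x)) * (indicator (cyl ?v) x :: real)) = indicator (cyl ?v)"
  proof
    fix x show "exp (- \<beta> * H (scons (\<not>b) x)) * (indicator (cyl ?v) x :: real) = indicator (cyl ?v) x"
    proof (cases "x \<in> cyl ?v")
      case True
      then have "x \<in> cyl [\<not>b]" by (auto dest!: cyl_Cons_prefix)
      then have "H (scons (\<not>b) x) = 0" by (intro Hz) simp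
      then show ?thesis by simp
    qed simp
  qed
  have "lam * m (replicate (Suc (Suc j)) (\<not>b) @ [b]) = m ?v"
    using eq_basic[of "\<not>b" ?v] unfolding fe int_ind by simp
  then have e: "m (replicate (Suc (Suc j)) (\<not>b) @ [b]) = m ?v * inverse lam"
    using lam by (simp add: field_simps)
  show ?case unfolding e Suc.IH by (simp add: inverse_mult_distrib mult_ac)
qed

lemma M2: "m (b # replicate (Suc j) (\<not>b) @ [b]) = Fterm Hb \<beta> lam j * m [\<not>b, b]"
proof -
  let ?v = "replicate (Suc j) (\<not>b) @ [b]"
  have fe: "(\<lambda>x. exp (- \<beta> * H (scons b x)) * (indicator (cyl ?v) x :: real)) =
     (\<lambda>x. exp (- \<beta> * Hb (Suc j)) * indicator (cyl ?v) x)"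
  proof
    fix x show "exp (- \<beta> * H (scons b x)) * (indicator (cyl ?v) x :: real) = exp (- \<beta> * Hb (Suc j)) * indicator (cyl ?v) x"
    proof (cases "x \<in> cyl ?v")
      case True
      then have "H (scons b x) = Hb (Suc j)" by (intro Hb_val) auto
      then show ?thesis by simp
    qed simp
  qed
  have "lam * m (b # ?v) = exp (- \<beta> * Hb (Suc j)) * m ?v"
    using eq_basic[of b ?v] unfolding fe by (simp add: space_nu)
  then have "lam * m (b # ?v) = exp (- \<beta> * Hb (Suc j)) * (m [\<not>b, b] * inverse (lam ^ j))"
    using M1[of j] by simp
  then have "m (b # ?v) = exp (- \<beta> * Hb (Suc j)) * (m [\<not>b, b] * inverse (lam ^ j)) * inverse lam"
    using lam by (intro solve_lam) auto
  then show ?thesis by (simp add: Fterm_def inverse_mult_distrib mult_ac)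
qed

lemma M3: "m (replicate (Suc k) (\<not>b)) \<le> inverse lam ^ k"
proof (induction k)
  case 0 then show ?case by simp
next
  case (Suc k)
  let ?v = "replicate (Suc k) (\<not>b)"
  have fe: "(\<lambda>x. exp (- \<beta> * H (scons (\<not>b) x)) * (indicator (cyl ?v) x :: real)) = indicator (cyl ?v)"
  proof
    fix x show "exp (- \<beta> * H (scons (\<not>b) x)) * (indicator (cyl ?v) x :: real) = indicator (cyl ?v) x"
    proof (cases "x \<in> cyl ?v")
      case True
      then have "x \<in> cyl [\<not>b]" by (auto dest!: cyl_Cons_prefix)
      then have "H (scons (\<not>b) x) = 0" by (intro Hz) simp
      then show ?thesis by simp
    qed simp
  qed
  have "lam * m (replicate (Suc (Suc k)) (\<not>b)) = m ?v"
    using eq_basic[of "\<not>b" ?v] unfolding fe int_ind by simp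
  then have "m (replicate (Suc (Suc k)) (\<not>b)) = m ?v * inverse lam" using lam by (simp add: field_simps)
  also have "\<dots> \<le> inverse lam ^ k * inverse lam" using Suc lam by (intro mult_right_mono) auto
  finally show ?case by (simp add: mult.commute)
qed

lemma M4: "lam * m (b # v) \<le> m v"
proof -
  let ?f = "\<lambda>x. exp (- \<beta> * H (scons b x)) * (indicator (cyl v) x :: real)"
  have "integral\<^sup>L \<nu> ?f \<le> integral\<^sup>L \<nu> (indicator (cyl v) :: seq \<Rightarrow> real)"
  proof (cases "integrable \<nu> ?f")
    case True
    show ?thesis
    proof (rule integral_mono[OF True])
      show "integrable \<nu> (indicator (cyl v) :: seq \<Rightarrow> real)"
        by (rule integrable_real_indicator[OF cyl_sets]) (simp add: P.emeasure_finite less_top[symmetric])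
      fix x
      have "exp (- \<beta> * H (scons b x)) \<le> 1" using beta Hnn[of "scons b x"] by simp
      then show "?f x \<le> indicator (cyl v) x" by (auto simp: indicator_def)
    qed
  next
    case False
    then show ?thesis by (simp add: not_integrable_integral_eq int_ind)
  qed
  then show ?thesis using eq_basic[of b v] int_ind by simp
qed

lemma M4': "m (b # replicate (Suc k) (\<not>b)) \<le> inverse lam ^ k"
proof -
  have "lam * m (b # replicate (Suc k) (\<not>b)) \<le> inverse lam ^ k" using M4 M3 order_trans by blast
  moreover have "m (b # replicate (Suc k) (\<not>b)) \<le> lam * m (b # replicate (Suc k) (\<not>b))"
    using lam mult_left_mono[of 1 lam "m (b # replicate (Suc k) (\<not>b))"] by (simp add: mult.commute)
  ultimately show ?thesis by linarith
qed

lemma M5: "m [b, \<not>b] = (\<Sum>j<N. m (b # replicate (Suc j) (\<not>b) @ [b])) + m (b # replicate (Suc N) (\<not>b))"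
proof (induction N)
  case 0 then show ?case by simp
next
  case (Suc N)
  let ?w = "b # replicate (Suc N) (\<not>b)"
  have "cyl ?w = cyl (?w @ [b]) \<union> cyl (?w @ [\<not>b])" "cyl (?w @ [b]) \<inter> cyl (?w @ [\<not>b]) = {}"
    using cyl_split[of ?w b] by auto
  then have "m ?w = m (?w @ [b]) + m (?w @ [\<not>b])"
    using P.finite_measure_Union[OF cyl_sets cyl_sets] by simp
  moreover have "?w @ [\<not>b] = b # replicate (Suc (Suc N)) (\<not>b)"
    by (simp add: replicate_append_same)
  ultimately show ?case using Suc by simp
qed

lemma nu_rel: "m [b, \<not>b] = F Hb \<beta> lam * m [\<not>b, b]"
proof -
  have lim0: "(\<lambda>N. m (b # replicate (Suc N) (\<not>b))) \<longlonglongrightarrow> 0"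
  proof (rule tendsto_sandwich[of "\<lambda>_. 0" _ _ "\<lambda>N. inverse lam ^ N"])
    show "\<forall>\<^sub>F N in sequentially. 0 \<le> m (b # replicate (Suc N) (\<not>b))" by simp
    show "\<forall>\<^sub>F N in sequentially. m (b # replicate (Suc N) (\<not>b)) \<le> inverse lam ^ N"
      using M4' by simp
    show "(\<lambda>N. inverse lam ^ N) \<longlonglongrightarrow> 0" using lam by (intro LIMSEQ_power_zero) (auto simp: inverse_less_1_iff)
  qed simp
  have "(\<lambda>N. m [b, \<not>b] - m (b # replicate (Suc N) (\<not>b))) \<longlonglongrightarrow> m [b, \<not>b] - 0"
    by (intro tendsto_diff tendsto_const lim0)
  moreover have "(\<lambda>N. m [b, \<not>b] - m (b # replicate (Suc N) (\<not>b))) = (\<lambda>N. \<Sum>j<N. Fterm Hb \<beta> lam j * m [\<not>b, b])"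
  proof
    fix N show "m [b, \<not>b] - m (b # replicate (Suc N) (\<not>b)) = (\<Sum>j<N. Fterm Hb \<beta> lam j * m [\<not>b, b])"
      using M5[of N] unfolding M2 by simp
  qed
  ultimately have "(\<lambda>j. Fterm Hb \<beta> lam j * m [\<not>b, b]) sums m [b, \<not>b]"
    unfolding sums_def by simp
  show ?thesis
  proof (cases "m [\<not>b, b] = 0")
    case True
    then show ?thesis using sums_unique[OF \<open>(\<lambda>j. _) sums _\<close>] by simp
  next
    case False
    from sums_divide[OF \<open>(\<lambda>j. _) sums _\<close>, of "m [\<not>b, b]"] False
    have "Fterm Hb \<beta> lam sums (m [b, \<not>b] / m [\<not>b, b])" by simp
    then show ?thesis unfolding F_def using False by (simp add: sums_unique[symmetric])
  qed
qed

end


lemma cyl_nonempty: "cyl w \<noteq> {}"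
proof -
  have "prep w (\<lambda>_. False) \<in> cyl (w @ [])" by (simp only: prep_cyl cyl_Nil)
  then show ?thesis by auto
qed

theorem corollary3p5:
  fixes H :: "seq \<Rightarrow> real" and H0 H1 :: "nat \<Rightarrow> real" and \<beta> lam :: real
    and \<Phi> :: "seq \<Rightarrow> real" and \<nu> :: "seq measure"
  assumes "reduced_double_well H H0 H1"
    and "\<beta> > 0"
    and "is_eigenfunction H \<beta> \<Phi> lam"
    and "is_eigenmeasure H \<beta> \<nu> lam"
  shows "(summable (Fterm H0 \<beta> lam) \<and> summable (Fterm H1 \<beta> lam) \<and>
         F H0 \<beta> lam * F H1 \<beta> lam = 1) \<and>
         (\<forall>x \<in> cyl [False, True]. \<forall>y \<in> cyl [True, False].
           \<Phi> x = F H1 \<beta> lam * \<Phi> y \<and> \<Phi> y = F H0 \<beta> lam * \<Phi> x) \<and>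
         (measure \<nu> (cyl [False, True]) = F H0 \<beta> lam * measure \<nu> (cyl [True, False]) \<and>
         measure \<nu> (cyl [True, False]) = F H1 \<beta> lam * measure \<nu> (cyl [False, True]))"
proof -
  note rdw = assms(1)[unfolded reduced_double_well_def]
  have Hnn: "\<And>x. H x \<ge> 0" using rdw by blast
  have Hz: "\<And>x. x \<in> cyl [False, False] \<or> x \<in> cyl [True, True] \<Longrightarrow> H x = 0" using rdw by blast
  have H0all: "\<forall>n\<ge>1. H0 n > 0 \<and> (\<forall>x \<in> cyl ([False] @ replicate n True @ [False]). H x = H0 n)"
    using rdw by blast
  have H1all: "\<forall>n\<ge>1. H1 n > 0 \<and> (\<forall>x \<in> cyl ([True] @ replicate n False @ [True]). H x = H1 n)"
    using rdw by blast
  have H0v: "\<And>n. n \<ge> 1 \<Longrightarrow> H0 n > 0" "\<And>n x. n \<ge> 1 \<Longrightarrow> x \<in> cyl (False # replicate n True @ [False]) \<Longrightarrow> H x = H0 n"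
    using H0all by simp_all
  have H1v: "\<And>n. n \<ge> 1 \<Longrightarrow> H1 n > 0" "\<And>n x. n \<ge> 1 \<Longrightarrow> x \<in> cyl (True # replicate n False @ [True]) \<Longrightarrow> H x = H1 n"
    using H1all by simp_all
  note ef = assms(3)[unfolded is_eigenfunction_def]
  have contP: "continuous_on UNIV \<Phi>" and pos: "\<And>x. \<Phi> x > 0" and le1: "\<And>x. \<Phi> x \<le> 1"
    and eig: "\<And>x. transfer H \<beta> \<Phi> x = lam * \<Phi> x" using ef by auto
  note em = assms(4)[unfolded is_eigenmeasure_def]
  have prob: "prob_space \<nu>" and sets_nu: "sets \<nu> = sets borel"
    and eigm: "\<And>f. continuous_on UNIV f \<Longrightarrow> integral\<^sup>L \<nu> (transfer H \<beta> f) = lam * integral\<^sup>L \<nu> f"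
    using em by auto
  have lam: "lam > 1"
  proof -
    define x0 :: seq where "x0 = (\<lambda>_. False)"
    have sx: "scons False x0 = x0" unfolding x0_def scons_def by (rule ext) (simp split: nat.split)
    have "x0 \<in> cyl [False, False]" unfolding x0_def cyl_iff by (auto simp: nth_Cons')
    then have "H x0 = 0" using Hz by blast
    then have "lam * \<Phi> x0 = \<Phi> x0 + exp (- \<beta> * H (scons True x0)) * \<Phi> (scons True x0)"
      using eig[of x0] sx by (simp add: transfer_def)
    moreover have "exp (- \<beta> * H (scons True x0)) * \<Phi> (scons True x0) > 0" using pos by simp
    ultimately have "lam * \<Phi> x0 > 1 * \<Phi> x0" by simp
    then show ?thesis using pos[of x0] by (simp only: mult_less_cancel_right)
  qed
  interpret A0: phi_side H H0 False \<beta> lam \<Phi>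
    apply unfold_locales
    using Hz apply simp
    using H0v(1) apply simp
    apply (rule H0v(2), assumption, simp)
    using assms(2) lam eig pos le1 by simp_all
  interpret A1: phi_side H H1 True \<beta> lam \<Phi>
    apply unfold_locales
    using Hz apply auto[1]
    using H1v(1) apply simp
    apply (rule H1v(2), assumption, simp)
    using assms(2) lam eig pos le1 by simp_all
  interpret N0: nu_side H H0 False \<beta> lam \<nu>
    apply (rule nu_side.intro)
    using Hz apply simp
    using Hnn apply simp
    apply (rule H0v(2), assumption, simp)
    using assms(2) lam prob sets_nu eigm by simp_all
  interpret N1: nu_side H H1 True \<beta> lam \<nu>
    apply (rule nu_side.intro)
    using Hz apply auto[1]
    using Hnn apply simp
    apply (rule H1v(2), assumption, simp)
    using assms(2) lam prob sets_nu eigm by simp_all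
  have meas: "measure \<nu> (cyl [False, True]) = F H0 \<beta> lam * measure \<nu> (cyl [True, False])"
    "measure \<nu> (cyl [True, False]) = F H1 \<beta> lam * measure \<nu> (cyl [False, True])"
    using N0.nu_rel N1.nu_rel by simp_all
  define A where "A = cyl [False, True]"
  define B where "B = cyl [True, False]"
  define F0 where "F0 = F H0 \<beta> lam"
  define F1 where "F1 = F H1 \<beta> lam"
  define p0 where "p0 j y = scons False (prep (replicate j True) y)" for j y
  define p1 where "p1 k x = scons True (prep (replicate k False) x)" for k x
  have F0pos: "F0 > 0" and F1pos: "F1 > 0" unfolding F0_def F1_def using A0.F_pos A1.F_pos by auto
  have sm0: "summable (Fterm H0 \<beta> lam)" and sm1: "summable (Fterm H1 \<beta> lam)"
    using A0.Fterm_summable A1.Fterm_summable .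
  have si0: "suminf (Fterm H0 \<beta> lam) = F0" and si1: "suminf (Fterm H1 \<beta> lam) = F1"
    unfolding F0_def F1_def F_def by simp_all
  have R0: "(\<lambda>j. Fterm H0 \<beta> lam j * \<Phi> (p0 j y)) sums \<Phi> y" "p0 j y \<in> A" if "y \<in> B" for y j
    using A0.rep_sums[of y] that unfolding A_def B_def p0_def by simp_all
  have R1: "(\<lambda>k. Fterm H1 \<beta> lam k * \<Phi> (p1 k x)) sums \<Phi> x" "p1 k x \<in> B" if "x \<in> A" for x k
    using A1.rep_sums[of x] that unfolding A_def B_def p1_def by simp_all
  have cA: "compact A" "A \<noteq> {}" and cB: "compact B" "B \<noteq> {}"
    unfolding A_def B_def using compact_cyl cyl_nonempty by auto
  have cont: "continuous_on S \<Phi>" for S using contP by (rule continuous_on_subset) simp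
  obtain xM where xM: "xM \<in> A" "\<And>x. x \<in> A \<Longrightarrow> \<Phi> x \<le> \<Phi> xM"
    using continuous_attains_sup[OF cA cont] by blast
  obtain xm where xm: "xm \<in> A" "\<And>x. x \<in> A \<Longrightarrow> \<Phi> x \<ge> \<Phi> xm"
    using continuous_attains_inf[OF cA cont] by blast
  obtain yM where yM: "yM \<in> B" "\<And>x. x \<in> B \<Longrightarrow> \<Phi> x \<le> \<Phi> yM"
    using continuous_attains_sup[OF cB cont] by blast
  obtain ym where ym: "ym \<in> B" "\<And>x. x \<in> B \<Longrightarrow> \<Phi> x \<ge> \<Phi> ym"
    using continuous_attains_inf[OF cB cont] by blast
  have f0nn: "\<And>k. Fterm H0 \<beta> lam k \<ge> 0" using A0.Fterm_pos less_imp_le by blast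
  have f1nn: "\<And>k. Fterm H1 \<beta> lam k \<ge> 0" using A1.Fterm_pos less_imp_le by blast
  have i1: "\<Phi> xM \<le> F1 * \<Phi> yM"
    using sums_le_const[OF f1nn R1(1)[OF xM(1)] sm1] yM(2) R1(2)[OF xM(1)] si1 by auto
  have i2: "\<Phi> yM \<le> F0 * \<Phi> xM"
    using sums_le_const[OF f0nn R0(1)[OF yM(1)] sm0] xM(2) R0(2)[OF yM(1)] si0 by auto
  have i3: "\<Phi> xm \<ge> F1 * \<Phi> ym"
    using sums_ge_const[OF f1nn R1(1)[OF xm(1)] sm1] ym(2) R1(2)[OF xm(1)] si1 by auto
  have i4: "\<Phi> ym \<ge> F0 * \<Phi> xm"
    using sums_ge_const[OF f0nn R0(1)[OF ym(1)] sm0] xm(2) R0(2)[OF ym(1)] si0 by auto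
  have "\<Phi> xM \<le> (F1 * F0) * \<Phi> xM"
    using order_trans[OF i1 mult_left_mono[OF i2 less_imp_le[OF F1pos]]] by (simp add: mult_ac)
  then have g1: "F1 * F0 \<ge> 1" using pos[of xM] by (simp add: mult_le_cancel_right1)
  have "\<Phi> xm \<ge> (F1 * F0) * \<Phi> xm"
    using order_trans[OF mult_left_mono[OF i4 less_imp_le[OF F1pos]] i3] by (simp add: mult_ac)
  then have g2: "F1 * F0 \<le> 1" using pos[of xm] by (simp add: mult_le_cancel_right2)
  have F01: "F0 * F1 = 1" using g1 g2 by (simp add: mult.commute)
  have eqM1: "\<Phi> xM = F1 * \<Phi> yM"
  proof -
    have "F1 * (F0 * \<Phi> xM) = \<Phi> xM" using F01 by (simp add: mult.assoc[symmetric] mult.commute[of F1])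
    then show ?thesis using i1 mult_left_mono[OF i2 less_imp_le[OF F1pos]] by linarith
  qed
  have eqM2: "\<Phi> yM = F0 * \<Phi> xM"
  proof -
    have "F0 * (F1 * \<Phi> yM) = \<Phi> yM" using F01 by (simp add: mult.assoc[symmetric])
    then show ?thesis using i2 mult_left_mono[OF i1 less_imp_le[OF F0pos]] by linarith
  qed
  have clA: "\<Phi> (p1 k x) = \<Phi> yM" if "x \<in> A" "\<Phi> x = \<Phi> xM" for x k
    by (rule sums_eq_all[OF A1.Fterm_pos R1(1)[OF that(1)] sm1])
      (use yM(2) R1(2)[OF that(1)] that(2) eqM1 si1 in auto)
  have clB: "\<Phi> (p0 j y) = \<Phi> xM" if "y \<in> B" "\<Phi> y = \<Phi> yM" for y j
    by (rule sums_eq_all[OF A0.Fterm_pos R0(1)[OF that(1)] sm0])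
      (use xM(2) R0(2)[OF that(1)] that(2) eqM2 si0 in auto)
  have inv: "(\<exists>k x'. x' \<in> A \<and> \<Phi> x' = \<Phi> xM \<and> prep w xM = prep (replicate k False) x') \<or>
             (\<exists>k y'. y' \<in> B \<and> \<Phi> y' = \<Phi> yM \<and> prep w xM = prep (replicate k True) y')" for w
  proof (induction w)
    case Nil
    then show ?case using xM(1) by (intro disjI1 exI[of _ 0] exI[of _ xM]) auto
  next
    case (Cons c w)
    from Cons.IH show ?case
    proof (elim disjE exE conjE)
      fix k x' assume h: "x' \<in> A" "\<Phi> x' = \<Phi> xM" "prep w xM = prep (replicate k False) x'"
      show ?thesis
      proof (cases c)
        case True
        then have "prep (c # w) xM = prep (replicate 0 True) (p1 k x')" using h(3) by (simp add: p1_def)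
        then show ?thesis using clA[OF h(1,2)] R1(2)[OF h(1)] by blast
      next
        case False
        then have "prep (c # w) xM = prep (replicate (Suc k) False) x'" using h(3) by simp
        then show ?thesis using h by blast
      qed
    next
      fix k y' assume h: "y' \<in> B" "\<Phi> y' = \<Phi> yM" "prep w xM = prep (replicate k True) y'"
      show ?thesis
      proof (cases c)
        case False
        then have "prep (c # w) xM = prep (replicate 0 False) (p0 k y')" using h(3) by (simp add: p0_def)
        then show ?thesis using clB[OF h(1,2)] R0(2)[OF h(1)] by blast
      next
        case True
        then have "prep (c # w) xM = prep (replicate (Suc k) True) y'" using h(3) by simp
        then show ?thesis using h by blast
      qed
    qed
  qed
  have maxA: "\<Phi> (prep w xM) = \<Phi> xM" if "prep w xM \<in> A" for w
    using inv[of w]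
  proof (elim disjE exE conjE)
    fix k x' assume h: "x' \<in> A" "\<Phi> x' = \<Phi> xM" "prep w xM = prep (replicate k False) x'"
    have "k = 0"
    proof (rule ccontr)
      assume "k \<noteq> 0"
      have "prep w xM 1 = True" using that unfolding A_def cyl_iff by auto
      moreover have "x' 0 = False" using h(1) unfolding A_def cyl_iff by auto
      ultimately show False using h(3) \<open>k \<noteq> 0\<close> by (auto simp: prep_nth split: if_splits)
    qed
    then show ?thesis using h by simp
  next
    fix k y' assume h: "y' \<in> B" "\<Phi> y' = \<Phi> yM" "prep w xM = prep (replicate k True) y'"
    have "prep w xM 0 = False" using that unfolding A_def cyl_iff by auto
    moreover have "y' 0 = True" using h(1) unfolding B_def cyl_iff by auto
    ultimately show ?thesis using h(3) by (auto simp: prep_nth split: if_splits)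
  qed
  have constA: "\<Phi> u = \<Phi> xM" if u: "u \<in> A" for u
  proof -
    define v where "v n = prep (map u [0..<Suc (Suc n)]) xM" for n
    have "v \<longlonglongrightarrow> u"
    proof (rule tendsto_seq)
      fix i show "\<forall>\<^sub>F n in sequentially. v n i = u i"
        using eventually_ge_at_top[of i] by eventually_elim (auto simp: v_def prep_nth nth_map_upt simp del: upt_Suc)
    qed
    then have "(\<lambda>n. \<Phi> (v n)) \<longlonglongrightarrow> \<Phi> u"
      by (rule continuous_on_tendsto_compose[OF contP]) auto
    moreover have "v n \<in> A" for n
      using u unfolding A_def cyl_iff by (auto simp: v_def prep_nth nth_map_upt less_2_cases_iff simp del: upt_Suc)
    then have "\<Phi> (v n) = \<Phi> xM" for n using maxA unfolding v_def by blast
    ultimately have "(\<lambda>n. \<Phi> xM) \<longlonglongrightarrow> \<Phi> u" by simp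
    then show ?thesis using LIMSEQ_unique[OF tendsto_const] by metis
  qed
  have constB: "\<Phi> y = F0 * \<Phi> xM" if y: "y \<in> B" for y
  proof -
    have "(\<lambda>j. Fterm H0 \<beta> lam j * \<Phi> xM) sums \<Phi> y"
      using R0(1)[OF y] constA[OF R0(2)[OF y]] by simp
    moreover have "(\<lambda>j. Fterm H0 \<beta> lam j * \<Phi> xM) sums (F0 * \<Phi> xM)"
      using sums_mult2[OF summable_sums[OF sm0]] si0 by simp
    ultimately show ?thesis using sums_unique2 by blast
  qed
  have part2: "\<forall>x \<in> cyl [False, True]. \<forall>y \<in> cyl [True, False].
           \<Phi> x = F H1 \<beta> lam * \<Phi> y \<and> \<Phi> y = F H0 \<beta> lam * \<Phi> x"
  proof (intro ballI)
    fix x y assume x: "x \<in> cyl [False, True]" and y: "y \<in> cyl [True, False]"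
    have hx: "\<Phi> x = \<Phi> xM" using constA x unfolding A_def by blast
    have hy: "\<Phi> y = \<Phi> yM" using constB[of y] y eqM2 unfolding B_def by (simp only: refl)
    show "\<Phi> x = F H1 \<beta> lam * \<Phi> y \<and> \<Phi> y = F H0 \<beta> lam * \<Phi> x"
      unfolding F1_def[symmetric] F0_def[symmetric] hx hy using eqM1 eqM2 by (intro conjI)
  qed
  show ?thesis using sm0 sm1 F01[unfolded F0_def F1_def] part2 meas by blast
qed

end
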